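(* Let $m\ge1$. The set $\mathbb{T}[[t_1,\ldots,t_m]]$, equipped with the operations $S\oplus T=\operatorname{Vert}(S\cup T)$ and $S\odot T=\operatorname{Vert}(S+T)$ (Minkowski sum), is a commutative idempotent semiring with zero element $\emptyset$ and unit element $\{(0,\ldots,0)\}$.
   Context: For $X\subseteq \mathbb{Z}_{\geq0}^m$, the Newton polygon $\mathcal{N}(X)\subseteq\mathbb{R}_{\geq0}^m$ is the convex hull (in $\mathbb{R}^m$) of $X+\mathbb{Z}_{\geq0}^m$. An element $x\in X$ is a vertex of $X$ if $x\notin\mathcal{N}(X\setminus\{x\})$, and $\operatorname{Vert}(X)$ denotes the set of vertices of $X$. The map $\operatorname{Vert}$ on the power set $\mathcal{P}(\mathbb{Z}_{\ge0}^m)$ satisfies $\operatorname{Vert}\circ\operatorname{Vert}=\operatorname{Vert}$, and $\mathbb{T}[[t_1,\ldots,t_m]]$ denotes its image $\{\operatorname{Vert}(X): X\subseteq\mathbb{Z}_{\ge0}^m\}$ (the set of vertex sets). A commutative semiring is a tuple $(S,+,\times,0,1)$ with $(S,+,0)$, $(S,\times,1)$ commutative monoids, $\times$ distributing over $+$, and $0\times a=0$; it is idempotent if $a+a=a$ for all $a$. *)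

theory Defs
  imports "HOL-Analysis.Analysis" "HOL-Algebra.Ring"
begin

text \<open>Exponent vectors in Z_{>=0}^m are represented as nat ^ 'm, where the finite
  index type 'm has m = CARD('m) >= 1 elements.  They are embedded in R^m = real ^ 'm.\<close>

definition to_real :: "nat ^ 'm \<Rightarrow> real ^ 'm" where
  "to_real x = (\<chi> i. real (x $ i))"

definition newton :: "(nat ^ 'm) set \<Rightarrow> (real ^ 'm) set" where
  "newton X = convex hull (to_real ` {x + y | x y. x \<in> X})"

definition Vert :: "(nat ^ 'm) set \<Rightarrow> (nat ^ 'm) set" where
  "Vert X = {x \<in> X. to_real x \<notin> newton (X - {x})}"

definition TPS :: "(nat ^ 'm) set set" where
  "TPS = range Vert"

definition minkowski :: "(nat ^ 'm) set \<Rightarrow> (nat ^ 'm) set \<Rightarrow> (nat ^ 'm) set" where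
  "minkowski S T = {s + t | s t. s \<in> S \<and> t \<in> T}"

definition tplus :: "(nat ^ 'm) set \<Rightarrow> (nat ^ 'm) set \<Rightarrow> (nat ^ 'm) set" where
  "tplus S T = Vert (S \<union> T)"

definition ttimes :: "(nat ^ 'm) set \<Rightarrow> (nat ^ 'm) set \<Rightarrow> (nat ^ 'm) set" where
  "ttimes S T = Vert (minkowski S T)"

definition TPS_semiring :: "((nat ^ 'm) set) ring" where
  "TPS_semiring = \<lparr>carrier = TPS, monoid.mult = ttimes, one = {0},
                   zero = {}, add = tplus\<rparr>"

end

theory Submission
  imports Defs
begin

abbreviation Pos :: "(real^'m) set" where "Pos \<equiv> {v. \<forall>i. 0 \<le> v$i}"

lemma to_real_add: "to_real (x + y) = to_real x + to_real y"
  by (simp add: to_real_def vec_eq_iff)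

lemma to_real_inj: "to_real x = to_real y \<longleftrightarrow> x = y"
  by (simp add: to_real_def vec_eq_iff)

lemma to_real_Pos: "to_real n \<in> Pos"
  by (simp add: to_real_def)

definition gens :: "(nat^'m) set \<Rightarrow> (nat^'m) set" where
  "gens X = {x + y | x y. x \<in> X}"

lemma newton_gens: "newton X = convex hull (to_real ` gens X)"
  by (simp add: newton_def gens_def)

lemma gens_mono: "X \<subseteq> Y \<Longrightarrow> gens X \<subseteq> gens Y"
  by (auto simp: gens_def)

lemma newton_mono: "X \<subseteq> Y \<Longrightarrow> newton X \<subseteq> newton Y"
  unfolding newton_gens by (intro hull_mono image_mono gens_mono)

lemma convex_newton: "convex (newton X)"
  by (simp add: newton_gens)

lemma gens_in_newton: "x \<in> gens X \<Longrightarrow> to_real x \<in> newton X"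
  unfolding newton_gens by (meson hull_subset image_eqI subsetD)

lemma self_in_newton: "x \<in> X \<Longrightarrow> to_real x \<in> newton X"
  by (rule gens_in_newton) (force simp: gens_def)

lemma newton_upc:
  assumes "p \<in> newton X" shows "p + to_real n \<in> newton X"
proof -
  have sub: "(\<lambda>q. to_real n + q) ` (to_real ` gens X) \<subseteq> to_real ` gens X"
  proof
    fix z assume "z \<in> (\<lambda>q. to_real n + q) ` (to_real ` gens X)"
    then obtain x y where z: "z = to_real n + to_real (x + y)" and "x \<in> X" by (auto simp: gens_def)
    then have "z = to_real (x + (y + n))" by (simp add: to_real_add algebra_simps)
    then show "z \<in> to_real ` gens X" using \<open>x\<in>X\<close> by (auto simp: gens_def)
  qed
  have "to_real n + p \<in> (\<lambda>q. to_real n + q) ` newton X" using assms by blast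
  also have "\<dots> = convex hull ((\<lambda>q. to_real n + q) ` (to_real ` gens X))"
    by (simp add: newton_gens convex_hull_translation)
  also have "\<dots> \<subseteq> newton X" unfolding newton_gens by (rule hull_mono[OF sub])
  finally show ?thesis by (simp add: add.commute)
qed

lemma axis_step:
  fixes N :: "(real^'m) set"
  assumes cN: "convex N" and up: "\<And>p n. p \<in> N \<Longrightarrow> p + to_real n \<in> N"
    and p: "p \<in> N" and t: "t \<ge> 0"
  shows "p + t *\<^sub>R axis i 1 \<in> N"
proof -
  define k :: nat where "k = nat \<lceil>t\<rceil> + 1"
  have kpos: "real k > 0" by (simp add: k_def)
  have tk: "t \<le> real k" unfolding k_def using t
  proof -
    have "t \<le> real_of_int \<lceil>t\<rceil>" by (rule le_of_int_ceiling)
    also have "\<dots> = real (nat \<lceil>t\<rceil>)" using t by simp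
    finally show "t \<le> real (nat \<lceil>t\<rceil> + 1)" by simp
  qed
  define n :: "nat^'m" where "n = (\<chi> j. if j = i then k else 0)"
  have tn: "to_real n = real k *\<^sub>R axis i 1"
    by (simp add: to_real_def n_def vec_eq_iff axis_def)
  have q: "p + to_real n \<in> N" by (rule up[OF p])
  have eq: "p + t *\<^sub>R axis i 1 = (1 - t/k) *\<^sub>R p + (t/k) *\<^sub>R (p + to_real n)"
    using kpos by (simp add: tn algebra_simps)
  have "(1 - t/k) *\<^sub>R p + (t/k) *\<^sub>R (p + to_real n) \<in> N"
    using cN p q kpos tk t by (intro convexD) (auto simp: field_simps)
  then show ?thesis using eq by simp
qed

lemma pos_closure:
  fixes N :: "(real^'m) set"
  assumes cN: "convex N" and up: "\<And>p n. p \<in> N \<Longrightarrow> p + to_real n \<in> N"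
    and p: "p \<in> N" and v: "v \<in> Pos"
  shows "p + v \<in> N"
proof -
  have "finite I \<Longrightarrow> p + (\<Sum>i\<in>I. (v$i) *\<^sub>R axis i 1) \<in> N" for I
  proof (induction I rule: finite_induct)
    case empty then show ?case using p by simp
  next
    case (insert j I)
    have "p + (\<Sum>i\<in>insert j I. (v$i) *\<^sub>R axis i 1) = (p + (\<Sum>i\<in>I. (v$i) *\<^sub>R axis i 1)) + (v$j) *\<^sub>R axis j 1"
      using insert by (simp add: algebra_simps)
    then show ?case using axis_step[OF cN up insert.IH, of "v$j" j] v by (simp add: add.assoc)
  qed
  then have "p + (\<Sum>i\<in>UNIV. (v$i) *\<^sub>R axis i 1) \<in> N" by simp
  moreover have "(\<Sum>i\<in>UNIV. (v$i) *\<^sub>R axis i 1) = v"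
    using basis_expansion[of v] by (simp add: scalar_mult_eq_scaleR)
  ultimately show ?thesis by simp
qed

lemma newton_pos: "p \<in> newton X \<Longrightarrow> v \<in> Pos \<Longrightarrow> p + v \<in> newton X"
  by (rule pos_closure[OF convex_newton newton_upc])

lemma seg_zero:
  fixes x w1 w2 :: "real^'m"
  assumes w: "w1 \<in> Pos" "w2 \<in> Pos" and t: "0 < t" "t < 1"
    and e: "x = (1-t) *\<^sub>R (x + w1) + t *\<^sub>R (x + w2)"
  shows "w1 = 0 \<and> w2 = 0"
proof -
  have "w1$i = 0 \<and> w2$i = 0" for i
  proof -
    have c: "x$i = (1-t)*(x$i+w1$i) + t*(x$i+w2$i)"
      using arg_cong[OF e, of "\<lambda>v. v$i"] by simp
    then have s: "(1-t)*w1$i + t*w2$i = 0" by (simp add: algebra_simps)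
    have "0 \<le> (1-t)*w1$i" "0 \<le> t*w2$i" using w t by auto
    then have "(1-t)*w1$i = 0" "t*w2$i = 0" using s by linarith+
    then show ?thesis using t by simp
  qed
  then show ?thesis by (simp add: vec_eq_iff)
qed

lemma H':
  fixes U :: "(real^'m) set" and x :: "real^'m"
  assumes cU: "convex U" and upU: "\<And>u w. u \<in> U \<Longrightarrow> w \<in> Pos \<Longrightarrow> u + w \<in> U"
    and xU: "x \<notin> U"
  shows "x extreme_point_of convex hull (U \<union> (\<lambda>w. x + w) ` Pos)"
proof -
  let ?W = "(\<lambda>w. x + w) ` Pos"
  define C where "C = convex hull (U \<union> ?W)"
  have cW: "convex ?W"
  proof (rule convexI)
    fix a b and u v :: real assume ab: "a \<in> ?W" "b \<in> ?W" and uv: "0 \<le> u" "0 \<le> v" "u + v = 1"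
    then obtain w1 w2 where w: "w1 \<in> Pos" "w2 \<in> Pos" "a = x + w1" "b = x + w2" by blast
    have "u *\<^sub>R a + v *\<^sub>R b = (u+v) *\<^sub>R x + (u *\<^sub>R w1 + v *\<^sub>R w2)"
      using w by (simp add: algebra_simps)
    also have "\<dots> = x + (u *\<^sub>R w1 + v *\<^sub>R w2)" using uv by simp
    finally have e: "u *\<^sub>R a + v *\<^sub>R b = x + (u *\<^sub>R w1 + v *\<^sub>R w2)" .
    have "u *\<^sub>R w1 + v *\<^sub>R w2 \<in> Pos" using w uv by auto
    then show "u *\<^sub>R a + v *\<^sub>R b \<in> ?W" using e by blast
  qed
  have "x \<in> ?W" by (rule image_eqI[of _ _ 0]) auto
  then have xC: "x \<in> C" unfolding C_def by (meson UnI2 hull_subset subsetD)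
  have False if a: "a \<in> C" and b: "b \<in> C" and xs: "x \<in> open_segment a b" for a b
  proof -
    obtain t where t: "0 < t" "t < 1" and ab: "a \<noteq> b" and xe: "x = (1-t) *\<^sub>R a + t *\<^sub>R b"
      using xs by (auto simp: in_segment)
    show False
    proof (cases "U = {}")
      case True
      then have "C = ?W" unfolding C_def using cW by (simp add: convex_hull_eq)
      then obtain w1 w2 where w: "w1 \<in> Pos" "w2 \<in> Pos" "a = x + w1" "b = x + w2" using a b by blast
      have "x = (1-t) *\<^sub>R (x + w1) + t *\<^sub>R (x + w2)" using xe unfolding w(3,4) .
      then have "w1 = 0 \<and> w2 = 0" using seg_zero[OF w(1,2) t] by blast
      then show False using w ab by simp
    next
      case False
      have Ceq: "C = {u *\<^sub>R s + v *\<^sub>R t | u v s t. u \<ge> 0 \<and> v \<ge> 0 \<and> u + v = 1 \<and> s \<in> U \<and> t \<in> ?W}"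
        unfolding C_def by (rule convex_hull_union_two[OF cU False cW]) (auto intro!: exI[of _ 0])
      obtain u1 v1 s1 w1 where A: "u1 \<ge> 0" "v1 \<ge> 0" "u1 + v1 = 1" "s1 \<in> U" "w1 \<in> Pos" "a = u1 *\<^sub>R s1 + v1 *\<^sub>R (x + w1)"
        using a unfolding Ceq by blast
      obtain u2 v2 s2 w2 where B: "u2 \<ge> 0" "v2 \<ge> 0" "u2 + v2 = 1" "s2 \<in> U" "w2 \<in> Pos" "b = u2 *\<^sub>R s2 + v2 *\<^sub>R (x + w2)"
        using b unfolding Ceq by blast
      define \<alpha> where "\<alpha> = (1-t)*u1 + t*u2"
      show False
      proof (cases "\<alpha> = 0")
        case True
        have "0 \<le> (1-t)*u1" "0 \<le> t*u2" using A B t by auto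
        then have "(1-t)*u1 = 0" "t*u2 = 0" using True unfolding \<alpha>_def by linarith+
        then have "u1 = 0" "u2 = 0" using t by auto
        then have "v1 = 1" "v2 = 1" using A B by auto
        then have "a = x + w1" "b = x + w2" using A(6) B(6) \<open>u1 = 0\<close> \<open>u2 = 0\<close> by auto
        have "x = (1-t) *\<^sub>R (x + w1) + t *\<^sub>R (x + w2)" using xe unfolding \<open>a = x + w1\<close> \<open>b = x + w2\<close> .
        then have "w1 = 0 \<and> w2 = 0" using seg_zero[OF A(5) B(5) t] by blast
        then show False using \<open>a = x + w1\<close> \<open>b = x + w2\<close> ab by simp
      next
        case False
        have "0 \<le> (1-t)*u1" "0 \<le> t*u2" using A B t by auto
        then have "\<alpha> \<ge> 0" unfolding \<alpha>_def by linarith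
        then have apos: "\<alpha> > 0" using False by linarith
        define s' where "s' = ((1-t)*u1/\<alpha>) *\<^sub>R s1 + (t*u2/\<alpha>) *\<^sub>R s2"
        have c1: "0 \<le> (1-t)*u1/\<alpha>" using A t apos by simp
        have c2: "0 \<le> t*u2/\<alpha>" using B t apos by simp
        have c3: "(1-t)*u1/\<alpha> + t*u2/\<alpha> = 1" using False
          by (simp add: \<alpha>_def add_divide_distrib[symmetric])
        have "s' \<in> U" unfolding s'_def by (rule convexD[OF cU A(4) B(4) c1 c2 c3])
        define d where "d = ((1-t) * v1/\<alpha>) *\<^sub>R w1 + (t * v2/\<alpha>) *\<^sub>R w2"
        have "d \<in> Pos" unfolding d_def using A B t apos by auto
        have "x$i = s'$i + d$i" for i
        proof -
          have xe': "x = (1-t) *\<^sub>R (u1 *\<^sub>R s1 + v1 *\<^sub>R (x + w1)) + t *\<^sub>R (u2 *\<^sub>R s2 + v2 *\<^sub>R (x + w2))"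
            using xe unfolding A(6) B(6) .
          have c: "x$i = (1-t)*(u1 *  s1$i + v1*(x$i+w1$i)) + t*(u2 *  s2$i + v2*(x$i+w2$i))"
            using arg_cong[OF xe', of "\<lambda>v. v$i"] by simp
          have v1: "v1 = 1 - u1" "v2 = 1 - u2" using A B by auto
          have "\<alpha> * x$i = (1-t)*u1 *  s1$i + t*u2 *  s2$i + (1-t) * v1*w1$i + t * v2*w2$i"
            using c unfolding \<alpha>_def v1 by (simp add: algebra_simps)
          then have "x$i = ((1-t)*u1 *  s1$i + t*u2 *  s2$i + (1-t) * v1*w1$i + t * v2*w2$i) / \<alpha>"
            using apos by (simp add: eq_divide_eq mult.commute)
          moreover have "s'$i + d$i = ((1-t)*u1 *  s1$i + t*u2 *  s2$i + (1-t) * v1*w1$i + t * v2*w2$i) / \<alpha>"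
            unfolding s'_def d_def using apos by (simp add: field_simps)
          ultimately show ?thesis by simp
        qed
        then have "x = s' + d" by (simp add: vec_eq_iff)
        then have "x \<in> U" using upU[OF \<open>s' \<in> U\<close> \<open>d \<in> Pos\<close>] by simp
        then show False using xU by simp
      qed
    qed
  qed
  then show ?thesis unfolding extreme_point_of_def C_def[symmetric] using xC by blast
qed


lemma newton_split:
  assumes "x \<in> A"
  shows "newton A = convex hull (newton (A - {x}) \<union> (\<lambda>w. to_real x + w) ` Pos)"
    (is "_ = convex hull ?S")
proof (rule antisym)
  show "newton A \<subseteq> convex hull ?S"
    unfolding newton_gens[of A]
  proof (rule hull_minimal)
    show "to_real ` gens A \<subseteq> convex hull ?S"
    proof
      fix z assume "z \<in> to_real ` gens A"
      then obtain y n where z: "z = to_real (y + n)" and y: "y \<in> A" by (auto simp: gens_def)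
      show "z \<in> convex hull ?S"
      proof (cases "y = x")
        case True
        then have "z \<in> (\<lambda>w. to_real x + w) ` Pos" using z to_real_Pos[of n]
          by (auto simp: to_real_add)
        then show ?thesis by (meson UnI2 hull_subset subsetD)
      next
        case False
        have "y + n \<in> gens (A - {x})" using False y unfolding gens_def by blast
        then have "z \<in> newton (A - {x})" using z by (simp add: gens_in_newton)
        then show ?thesis by (meson UnI1 hull_subset subsetD)
      qed
    qed
    show "convex (convex hull ?S)" by simp
  qed
  show "convex hull ?S \<subseteq> newton A"
  proof (rule hull_minimal)
    show "?S \<subseteq> newton A"
      using newton_mono[of "A - {x}" A] newton_pos[OF self_in_newton[OF assms]] by auto
    show "convex (newton A)" by (rule convex_newton)
  qed
qed

lemma Vert_extreme: "x \<in> Vert A \<Longrightarrow> to_real x extreme_point_of newton A"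
proof -
  assume "x \<in> Vert A"
  then have x: "x \<in> A" "to_real x \<notin> newton (A - {x})" by (auto simp: Vert_def)
  show ?thesis unfolding newton_split[OF x(1)]
    by (rule H'[OF convex_newton newton_pos x(2)])
qed

lemma not_extreme_shift:
  assumes "y \<in> A" "n \<noteq> 0" shows "\<not> to_real (y + n) extreme_point_of newton A"
proof
  assume e: "to_real (y + n) extreme_point_of newton A"
  have m: "to_real (y + n) = midpoint (to_real y) (to_real (y + n + n))"
    by (simp add: to_real_def midpoint_def vec_eq_iff field_simps)
  have "y \<noteq> y + n + n" using assms(2) by (auto simp: vec_eq_iff)
  then have ne: "to_real y \<noteq> to_real (y + n + n)" by (simp add: to_real_inj)
  have "to_real y \<in> newton A" by (rule self_in_newton[OF assms(1)])
  moreover have "to_real (y + (n + n)) \<in> newton A" using assms(1)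
    by (intro gens_in_newton) (auto simp: gens_def)
  ultimately show False using e m ne unfolding extreme_point_of_def
    by (metis midpoint_in_open_segment add.assoc)
qed

lemma extreme_in: "to_real x extreme_point_of newton A \<Longrightarrow> x \<in> A"
proof -
  assume e: "to_real x extreme_point_of newton A"
  then have "to_real x \<in> to_real ` gens A" unfolding newton_gens by (rule extreme_point_of_convex_hull)
  then obtain y n where xy: "x = y + n" "y \<in> A" by (auto simp: gens_def to_real_inj)
  show "x \<in> A"
  proof (cases "n = 0")
    case True then show ?thesis using xy by simp
  next
    case False then show ?thesis using not_extreme_shift[OF xy(2) False] e xy(1) by simp
  qed
qed

lemma extreme_notin: "to_real x extreme_point_of newton A \<Longrightarrow> to_real x \<notin> newton (A - {x})"
proof
  assume e: "to_real x extreme_point_of newton A" and xin: "to_real x \<in> newton (A - {x})"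
  have c: "convex (newton A - {to_real x})" using e convex_newton extreme_point_of_stillconvex by blast
  have "to_real ` gens (A - {x}) \<subseteq> newton A - {to_real x}"
  proof
    fix z assume "z \<in> to_real ` gens (A - {x})"
    then obtain y n where z: "z = to_real (y + n)" "y \<in> A" "y \<noteq> x" by (auto simp: gens_def)
    have "y + n \<in> gens A" using z(2) unfolding gens_def by blast
    then have "z \<in> newton A" using z(1) by (simp add: gens_in_newton)
    moreover have "z \<noteq> to_real x"
    proof
      assume "z = to_real x"
      then have xe: "x = y + n" using z by (simp add: to_real_inj)
      then have "n \<noteq> 0" using z(3) by auto
      then show False using not_extreme_shift[OF z(2)] e xe by simp
    qed
    ultimately show "z \<in> newton A - {to_real x}" by simp
  qed
  then have "newton (A - {x}) \<subseteq> newton A - {to_real x}"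
    unfolding newton_gens[of "A - {x}"] using c by (rule hull_minimal)
  then show False using xin by auto
qed

lemma Vert_char: "Vert A = {x. to_real x extreme_point_of newton A}"
proof (rule Set.set_eqI, rule iffI)
  fix x assume "x \<in> Vert A" then show "x \<in> {x. to_real x extreme_point_of newton A}"
    using Vert_extreme by blast
next
  fix x assume "x \<in> {x. to_real x extreme_point_of newton A}"
  then show "x \<in> Vert A" using extreme_in extreme_notin unfolding Vert_def by blast
qed

lemma Vert_cong: "newton A = newton B \<Longrightarrow> Vert A = Vert B"
  by (simp add: Vert_char)

lemma Vert_sub: "Vert A \<subseteq> A"
  by (auto simp: Vert_def)

lemma Vert_idem: "Vert (Vert A) = Vert A"
proof (rule antisym)
  show "Vert (Vert A) \<subseteq> Vert A" by (rule Vert_sub)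
  show "Vert A \<subseteq> Vert (Vert A)"
  proof
    fix x assume x: "x \<in> Vert A"
    have "newton (Vert A - {x}) \<subseteq> newton (A - {x})" using Vert_sub by (intro newton_mono) blast
    then show "x \<in> Vert (Vert A)" using x unfolding Vert_def by blast
  qed
qed

lemma newton_drop:
  assumes g: "g \<in> A" and gin: "to_real g \<in> newton (A - {g})"
  shows "newton A = newton (A - {g})"
proof -
  have "(\<lambda>w. to_real g + w) ` Pos \<subseteq> newton (A - {g})" using newton_pos[OF gin] by auto
  then have "newton (A - {g}) \<union> (\<lambda>w. to_real g + w) ` Pos = newton (A - {g})" by blast
  then show ?thesis unfolding newton_split[OF g] using convex_newton
    by (simp add: convex_hull_eq)
qed

lemma K_finite: "finite A \<Longrightarrow> newton (Vert A) = newton A"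
proof (induction A rule: finite_psubset_induct)
  case (psubset A)
  show ?case
  proof (cases "Vert A = A")
    case True then show ?thesis by simp
  next
    case False
    then obtain g where g: "g \<in> A" "g \<notin> Vert A" using Vert_sub by blast
    then have gin: "to_real g \<in> newton (A - {g})" by (auto simp: Vert_def)
    have eq: "newton A = newton (A - {g})" by (rule newton_drop[OF g(1) gin])
    have "newton (Vert (A - {g})) = newton (A - {g})" using psubset.IH[of "A - {g}"] g(1) by blast
    moreover have "Vert A = Vert (A - {g})" by (rule Vert_cong[OF eq])
    ultimately show ?thesis using eq by simp
  qed
qed

lemma dickson_aux:
  fixes I :: "'m::finite set"
  assumes "finite I"
  shows "\<exists>F \<subseteq> A. finite F \<and> (\<forall>a\<in>A. \<exists>f\<in>F. \<forall>i\<in>I. f$i \<le> (a::nat^'m)$i)"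
  using assms
proof (induction I arbitrary: A rule: finite_induct)
  case empty
  show ?case
  proof (cases "A = {}")
    case True then show ?thesis by auto
  next
    case False then obtain a where "a \<in> A" by auto
    then show ?thesis by (intro exI[of _ "{a}"]) auto
  qed
next
  case (insert j I)
  obtain F where F: "F \<subseteq> A" "finite F" "\<forall>a\<in>A. \<exists>f\<in>F. \<forall>i\<in>I. f$i \<le> a$i"
    using insert.IH[of A] by blast
  define N where "N = (\<Sum>f\<in>F. f$j)"
  have "\<forall>k. \<exists>Fk \<subseteq> {a\<in>A. a$j = k}. finite Fk \<and> (\<forall>a\<in>{a\<in>A. a$j = k}. \<exists>f\<in>Fk. \<forall>i\<in>I. f$i \<le> a$i)"
    using insert.IH by blast
  then obtain FF where FF0: "\<forall>k. FF k \<subseteq> {a\<in>A. a$j = k} \<and> finite (FF k) \<and> (\<forall>a\<in>{a\<in>A. a$j = k}. \<exists>f\<in>FF k. \<forall>i\<in>I. f$i \<le> a$i)"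
    using choice[of "\<lambda>k Fk. Fk \<subseteq> {a\<in>A. a$j = k} \<and> finite Fk \<and> (\<forall>a\<in>{a\<in>A. a$j = k}. \<exists>f\<in>Fk. \<forall>i\<in>I. f$i \<le> a$i)"]
    by blast
  have FF: "\<And>k. FF k \<subseteq> {a\<in>A. a$j = k}" "\<And>k. finite (FF k)"
    "\<And>k. \<forall>a\<in>{a\<in>A. a$j = k}. \<exists>f\<in>FF k. \<forall>i\<in>I. f$i \<le> a$i"
    using FF0 by blast+
  show ?case
  proof (intro exI[of _ "F \<union> (\<Union>k<N. FF k)"] conjI ballI)
    show "F \<union> (\<Union>k<N. FF k) \<subseteq> A" using F FF(1) by blast
    show "finite (F \<union> (\<Union>k<N. FF k))" using F FF(2) by auto
    fix a assume a: "a \<in> A"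
    show "\<exists>f\<in>F \<union> (\<Union>k<N. FF k). \<forall>i\<in>insert j I. f$i \<le> a$i"
    proof (cases "a$j < N")
      case True
      obtain f where f: "f \<in> FF (a$j)" "\<forall>i\<in>I. f$i \<le> a$i" using FF(3)[of "a$j"] a by blast
      moreover have "f$j = a$j" using FF(1) f(1) by blast
      ultimately show ?thesis using True by (intro bexI[of _ f]) auto
    next
      case False
      obtain f where f: "f\<in>F" "\<forall>i\<in>I. f$i \<le> a$i" using F(3) a by blast
      moreover have "f$j \<le> N" unfolding N_def using f(1) F(2) by (intro member_le_sum) auto
      ultimately show ?thesis using False by (intro bexI[of _ f]) auto
    qed
  qed
qed

lemma finite_basis:
  fixes A :: "(nat^'m) set"
  shows "\<exists>F \<subseteq> A. finite F \<and> newton F = newton A"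
proof -
  obtain F where F: "F \<subseteq> A" "finite F" "\<forall>a\<in>A. \<exists>f\<in>F. \<forall>i\<in>UNIV. f$i \<le> (a::nat^'m)$i"
    using dickson_aux[of UNIV A] by auto
  have "gens A \<subseteq> gens F"
  proof
    fix z assume "z \<in> gens A"
    then obtain a y where z: "z = a + y" "a \<in> A" by (auto simp: gens_def)
    then obtain f where f: "f \<in> F" "\<forall>i. f$i \<le> a$i" using F(3) by blast
    have "z$i = (f + ((a - f) + y))$i" for i
    proof -
      have "f$i \<le> a$i" using f(2) by blast
      then show ?thesis using z(1) by simp
    qed
    then have "z = f + ((a - f) + y)" by (simp add: vec_eq_iff)
    then show "z \<in> gens F" using f(1) by (auto simp: gens_def)
  qed
  then have "newton A \<subseteq> newton F" unfolding newton_gens by (intro hull_mono image_mono)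
  moreover have "newton F \<subseteq> newton A" by (rule newton_mono[OF F(1)])
  ultimately show ?thesis using F by blast
qed

lemma K: "newton (Vert A) = newton A"
proof -
  obtain F where F: "F \<subseteq> A" "finite F" "newton F = newton A" using finite_basis by blast
  have "Vert A = Vert F" by (rule Vert_cong) (simp add: F(3))
  then show ?thesis using K_finite[OF F(2)] F(3) by simp
qed

lemma newton_Un: "newton (A \<union> B) = convex hull (newton A \<union> newton B)"
proof (rule antisym)
  have "to_real ` gens A \<subseteq> newton A" "to_real ` gens B \<subseteq> newton B"
    by (simp_all add: newton_gens hull_subset)
  moreover have "gens (A \<union> B) = gens A \<union> gens B" by (auto simp: gens_def)
  ultimately have "to_real ` gens (A \<union> B) \<subseteq> newton A \<union> newton B"
    by auto
  then show "newton (A \<union> B) \<subseteq> convex hull (newton A \<union> newton B)"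
    unfolding newton_gens[of "A \<union> B"] by (rule hull_mono)
  show "convex hull (newton A \<union> newton B) \<subseteq> newton (A \<union> B)"
    using newton_mono[of A "A \<union> B"] newton_mono[of B "A \<union> B"]
    by (intro hull_minimal) (auto intro: convex_newton)
qed

lemma newton_mink: "newton (minkowski A B) = newton A + newton B"
proof -
  have "to_real ` gens (minkowski A B) = to_real ` gens A + to_real ` gens B"
  proof (rule Set.set_eqI, rule iffI)
    fix z assume "z \<in> to_real ` gens (minkowski A B)"
    then obtain a b y where z: "z = to_real ((a + b) + y)" "a \<in> A" "b \<in> B"
      by (auto simp: gens_def minkowski_def)
    have "z = to_real (a + y) + to_real (b + 0)" using z(1) by (simp add: to_real_add algebra_simps)
    moreover have "a + y \<in> gens A" "b + 0 \<in> gens B" using z unfolding gens_def by blast+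
    ultimately show "z \<in> to_real ` gens A + to_real ` gens B"
      by (auto simp: set_plus_def)
  next
    fix z assume "z \<in> to_real ` gens A + to_real ` gens B"
    then obtain a y b y' where z: "z = to_real (a + y) + to_real (b + y')" "a \<in> A" "b \<in> B"
      by (auto simp: set_plus_def gens_def)
    then have "z = to_real ((a + b) + (y + y'))" by (simp add: to_real_add algebra_simps)
    moreover have "(a + b) + (y + y') \<in> gens (minkowski A B)" using z(2,3)
      unfolding gens_def minkowski_def by blast
    ultimately show "z \<in> to_real ` gens (minkowski A B)" by blast
  qed
  then show ?thesis by (simp add: newton_gens convex_hull_set_plus)
qed

lemma newton_Un_Vert: "newton (Vert A \<union> B) = newton (A \<union> B)" "newton (A \<union> Vert B) = newton (A \<union> B)"
  by (simp_all add: newton_Un K)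

lemma newton_mink_Vert: "newton (minkowski (Vert A) B) = newton (minkowski A B)"
  "newton (minkowski A (Vert B)) = newton (minkowski A B)"
  by (simp_all add: newton_mink K)

lemma mink_sub: "minkowski A B \<subseteq> minkowski B A"
proof
  fix z assume "z \<in> minkowski A B"
  then obtain s t where st: "z = s + t" "s \<in> A" "t \<in> B" by (auto simp: minkowski_def)
  then have "z = t + s" by (simp add: add.commute)
  then show "z \<in> minkowski B A" using st unfolding minkowski_def by blast
qed

lemma mink_comm: "minkowski A B = minkowski B A"
  by (rule antisym) (rule mink_sub)+

lemma mink_assoc: "minkowski (minkowski A B) C = minkowski A (minkowski B C)"
proof (rule antisym)
  show "minkowski (minkowski A B) C \<subseteq> minkowski A (minkowski B C)"
  proof
    fix z assume "z \<in> minkowski (minkowski A B) C"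
    then obtain a b c where st: "z = (a + b) + c" "a \<in> A" "b \<in> B" "c \<in> C" by (auto simp: minkowski_def)
    then have "z = a + (b + c)" by (simp add: add.assoc)
    moreover have "b + c \<in> minkowski B C" using st unfolding minkowski_def by blast
    ultimately show "z \<in> minkowski A (minkowski B C)" using st unfolding minkowski_def by blast
  qed
  show "minkowski A (minkowski B C) \<subseteq> minkowski (minkowski A B) C"
  proof
    fix z assume "z \<in> minkowski A (minkowski B C)"
    then obtain a b c where st: "z = a + (b + c)" "a \<in> A" "b \<in> B" "c \<in> C" by (auto simp: minkowski_def)
    then have "z = (a + b) + c" by (simp add: add.assoc)
    moreover have "a + b \<in> minkowski A B" using st unfolding minkowski_def by blast
    ultimately show "z \<in> minkowski (minkowski A B) C" using st unfolding minkowski_def by blast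
  qed
qed

lemma mink_Un: "minkowski (A \<union> B) C = minkowski A C \<union> minkowski B C"
  by (auto simp: minkowski_def)

lemma mink_0: "minkowski {0} A = A"
  by (auto simp: minkowski_def)

lemma mink_empty: "minkowski {} A = {}"
  by (auto simp: minkowski_def)

lemma Vert_empty: "Vert {} = {}"
  by (simp add: Vert_def)

lemma Vert_0: "Vert {0} = {0}"
  by (simp add: Vert_def newton_gens gens_def)

theorem mainTheorem5:
  shows "semiring (TPS_semiring :: ((nat ^ 'm) set) ring)
       \<and> comm_monoid (TPS_semiring :: ((nat ^ 'm) set) ring)
       \<and> (\<forall>a \<in> carrier (TPS_semiring :: ((nat ^ 'm) set) ring).
            a \<oplus>\<^bsub>(TPS_semiring :: ((nat ^ 'm) set) ring)\<^esub> a = a)"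
proof -
  let ?R = "TPS_semiring :: ((nat ^ 'm) set) ring"
  have car: "carrier ?R = range Vert"
    and add: "\<And>a b. a \<oplus>\<^bsub>?R\<^esub> b = Vert (a \<union> b)"
    and mul: "\<And>a b. a \<otimes>\<^bsub>?R\<^esub> b = Vert (minkowski a b)"
    and one: "\<one>\<^bsub>?R\<^esub> = {0}" and zero: "\<zero>\<^bsub>?R\<^esub> = {}"
    by (simp_all add: TPS_semiring_def TPS_def tplus_def ttimes_def)
  have idem: "\<And>a. a \<in> carrier ?R \<Longrightarrow> Vert a = a" using car Vert_idem by auto
  have inR: "\<And>a. Vert a \<in> carrier ?R" using car by auto
  have cm: "comm_monoid ?R"
  proof (rule comm_monoidI)
    show "\<one>\<^bsub>?R\<^esub> \<in> carrier ?R" using one inR[of "{0}"] by (simp add: Vert_0)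
    fix x y z assume x: "x \<in> carrier ?R" and y: "y \<in> carrier ?R" and z: "z \<in> carrier ?R"
    show "x \<otimes>\<^bsub>?R\<^esub> y \<in> carrier ?R" by (simp add: mul inR)
    show "\<one>\<^bsub>?R\<^esub> \<otimes>\<^bsub>?R\<^esub> x = x" using idem[OF x] by (simp add: mul one mink_0)
    show "x \<otimes>\<^bsub>?R\<^esub> y = y \<otimes>\<^bsub>?R\<^esub> x" by (simp add: mul mink_comm)
    show "x \<otimes>\<^bsub>?R\<^esub> y \<otimes>\<^bsub>?R\<^esub> z = x \<otimes>\<^bsub>?R\<^esub> (y \<otimes>\<^bsub>?R\<^esub> z)"
      unfolding mul by (rule Vert_cong) (simp add: newton_mink_Vert mink_assoc)
  qed
  have am: "abelian_monoid ?R"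
  proof (rule abelian_monoidI)
    show "\<zero>\<^bsub>?R\<^esub> \<in> carrier ?R" using zero inR[of "{}"] by (simp add: Vert_empty)
    fix x y z assume x: "x \<in> carrier ?R" and y: "y \<in> carrier ?R" and z: "z \<in> carrier ?R"
    show "x \<oplus>\<^bsub>?R\<^esub> y \<in> carrier ?R" by (simp add: add inR)
    show "\<zero>\<^bsub>?R\<^esub> \<oplus>\<^bsub>?R\<^esub> x = x" using idem[OF x] by (simp add: add zero)
    show "x \<oplus>\<^bsub>?R\<^esub> y = y \<oplus>\<^bsub>?R\<^esub> x" by (simp add: add Un_commute)
    show "x \<oplus>\<^bsub>?R\<^esub> y \<oplus>\<^bsub>?R\<^esub> z = x \<oplus>\<^bsub>?R\<^esub> (y \<oplus>\<^bsub>?R\<^esub> z)"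
      unfolding add by (rule Vert_cong) (simp add: newton_Un_Vert Un_assoc)
  qed
  have sr: "semiring ?R"
  proof (rule semiring.intro[OF am comm_monoid.axioms(1)[OF cm]], rule semiring_axioms.intro)
    fix x y z assume x: "x \<in> carrier ?R" and y: "y \<in> carrier ?R" and z: "z \<in> carrier ?R"
    show "(x \<oplus>\<^bsub>?R\<^esub> y) \<otimes>\<^bsub>?R\<^esub> z = x \<otimes>\<^bsub>?R\<^esub> z \<oplus>\<^bsub>?R\<^esub> y \<otimes>\<^bsub>?R\<^esub> z"
      unfolding add mul by (rule Vert_cong) (simp add: newton_Un_Vert newton_mink_Vert mink_Un)
    show "z \<otimes>\<^bsub>?R\<^esub> (x \<oplus>\<^bsub>?R\<^esub> y) = z \<otimes>\<^bsub>?R\<^esub> x \<oplus>\<^bsub>?R\<^esub> z \<otimes>\<^bsub>?R\<^esub> y"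
      unfolding add mul by (rule Vert_cong) (simp add: newton_Un_Vert newton_mink_Vert mink_Un mink_comm[of z])
  next
    fix x assume x: "x \<in> carrier ?R"
    show "\<zero>\<^bsub>?R\<^esub> \<otimes>\<^bsub>?R\<^esub> x = \<zero>\<^bsub>?R\<^esub>" by (simp add: mul zero mink_empty Vert_empty)
    show "x \<otimes>\<^bsub>?R\<^esub> \<zero>\<^bsub>?R\<^esub> = \<zero>\<^bsub>?R\<^esub>" by (simp add: mul zero mink_comm[of x] mink_empty Vert_empty)
  qed
  have "\<forall>a \<in> carrier ?R. a \<oplus>\<^bsub>?R\<^esub> a = a" using idem by (simp add: add)
  then show ?thesis using sr cm by blast
qed

end
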